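(* Let $n\ge 1$ be an integer and let $P_n$ denote the path on $n$ vertices. For any $x\in\mathbb{N}$ and any integer $y$ with $0\le y\le x$, except for the case $x=y=1$, we have \[ P(P_n,x,y) = \frac{\sqrt{(x+1)^2-4y}-x-1}{2\sqrt{(x+1)^2-4y}}\cdot \left( \frac{x-1-\sqrt{(x+1)^2-4y}}{2} \right)^n + \frac{\sqrt{(x+1)^2-4y}+x+1}{2\sqrt{(x+1)^2-4y}}\cdot \left( \frac{x-1+\sqrt{(x+1)^2-4y}}{2} \right)^n . \]
   Context: For a finite simple graph $G=(V,E)$, $x\in\mathbb{N}$ and $y\in\{0,\dots,x\}$, the bivariate chromatic polynomial $P(G,x,y)$ is the number of maps $f:V\to\{1,\dots,x\}$ such that for every edge $\{v,w\}\in E$, either $f(v)\neq f(w)$ or $f(v)=f(w)>y$. (Equivalently: colorings in which adjacent vertices receive different colors or share a color from $\{y+1,\dots,x\}$.) *)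

theory Defs
  imports Complex_Main "HOL-Library.FuncSet"
begin

text \<open>Maps are taken extensional (undefined outside V)
so that the set of maps is finite.\<close>

definition bivariate_chrom :: "'a set \<Rightarrow> 'a set set \<Rightarrow> nat \<Rightarrow> nat \<Rightarrow> nat" where
  "bivariate_chrom V E x y =
     card {f. f \<in> V \<rightarrow>\<^sub>E {1..x} \<and>
              (\<forall>v w. {v, w} \<in> E \<longrightarrow> f v \<noteq> f w \<or> f v > y)}"

definition path_vertices :: "nat \<Rightarrow> nat set" where
  "path_vertices n = {0..<n}"

definition path_edges :: "nat \<Rightarrow> nat set set" where
  "path_edges n = {{i, Suc i} | i. Suc i < n}"

end

theory Submission
  imports Defs
begin

definition S :: "nat \<Rightarrow> nat \<Rightarrow> nat \<Rightarrow> (nat\<Rightarrow>nat) set" where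
  "S x y n = {f. f \<in> {0..<Suc n} \<rightarrow>\<^sub>E {1..x} \<and> (\<forall>i<n. f i \<noteq> f (Suc i) \<or> f i > y)}"

lemma link: "bivariate_chrom (path_vertices (Suc n)) (path_edges (Suc n)) x y = card (S x y n)"
proof -
  have "{f. f \<in> path_vertices (Suc n) \<rightarrow>\<^sub>E {1..x} \<and>
              (\<forall>v w. {v, w} \<in> path_edges (Suc n) \<longrightarrow> f v \<noteq> f w \<or> f v > y)} = S x y n"
  proof (rule set_eqI, rule iffI)
    fix f assume "f \<in> {f. f \<in> path_vertices (Suc n) \<rightarrow>\<^sub>E {1..x} \<and>
              (\<forall>v w. {v, w} \<in> path_edges (Suc n) \<longrightarrow> f v \<noteq> f w \<or> f v > y)}"
    hence A: "f \<in> {0..<Suc n} \<rightarrow>\<^sub>E {1..x}" and B: "\<And>v w. {v, w} \<in> path_edges (Suc n) \<Longrightarrow> f v \<noteq> f w \<or> f v > y"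
      by (auto simp: path_vertices_def)
    have "\<forall>i<n. f i \<noteq> f (Suc i) \<or> f i > y"
    proof (intro allI impI)
      fix i assume "i < n"
      hence "{i, Suc i} \<in> path_edges (Suc n)" unfolding path_edges_def by auto
      thus "f i \<noteq> f (Suc i) \<or> f i > y" using B by blast
    qed
    thus "f \<in> S x y n" using A by (simp add: S_def)
  next
    fix f assume "f \<in> S x y n"
    hence A: "f \<in> {0..<Suc n} \<rightarrow>\<^sub>E {1..x}" and B: "\<forall>i<n. f i \<noteq> f (Suc i) \<or> f i > y"
      by (auto simp: S_def)
    have "\<forall>v w. {v, w} \<in> path_edges (Suc n) \<longrightarrow> f v \<noteq> f w \<or> f v > y"
    proof (intro allI impI)
      fix v w assume "{v, w} \<in> path_edges (Suc n)"
      then obtain i where i: "Suc i < Suc n" "{v,w} = {i, Suc i}" unfolding path_edges_def by auto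
      hence "(v = i \<and> w = Suc i) \<or> (v = Suc i \<and> w = i)" by (auto simp: doubleton_eq_iff)
      thus "f v \<noteq> f w \<or> f v > y" using B i by auto
    qed
    thus "f \<in> {f. f \<in> path_vertices (Suc n) \<rightarrow>\<^sub>E {1..x} \<and>
              (\<forall>v w. {v, w} \<in> path_edges (Suc n) \<longrightarrow> f v \<noteq> f w \<or> f v > y)}"
      using A by (simp add: path_vertices_def)
  qed
  thus ?thesis unfolding bivariate_chrom_def by simp
qed

lemma finS: "finite (S x y n)"
proof -
  have "S x y n \<subseteq> {0..<Suc n} \<rightarrow>\<^sub>E {1..x}" by (auto simp: S_def)
  thus ?thesis by (rule finite_subset) (simp add: finite_PiE)
qed

lemma decomp:
  "card {f\<in>S x y (Suc n). P (f (Suc n))} =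
   (\<Sum>g\<in>S x y n. card {c\<in>{1..x}. (g n \<noteq> c \<or> g n > y) \<and> P c})"
proof -
  let ?B = "\<lambda>g. {c\<in>{1..x}. (g n \<noteq> c \<or> g n > y) \<and> P c}"
  have "bij_betw (\<lambda>f. (restrict f {0..<Suc n}, f (Suc n))) {f\<in>S x y (Suc n). P (f (Suc n))} (SIGMA g:S x y n. ?B g)"
  proof (rule bij_betw_byWitness[where f' = "\<lambda>(g,c). g(Suc n := c)"])
    show "\<forall>a\<in>{f \<in> S x y (Suc n). P (f (Suc n))}. (case (restrict a {0..<Suc n}, a (Suc n)) of (g, c) \<Rightarrow> g(Suc n := c)) = a"
      by (auto simp: S_def PiE_def extensional_def fun_eq_iff)
    show "\<forall>a'\<in>(SIGMA g:S x y n. ?B g). (restrict (case a' of (g, c) \<Rightarrow> g(Suc n := c)) {0..<Suc n}, (case a' of (g, c) \<Rightarrow> g(Suc n := c)) (Suc n)) = a'"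
      by (auto simp: S_def PiE_def extensional_def fun_eq_iff)
    show "(\<lambda>f. (restrict f {0..<Suc n}, f (Suc n))) ` {f \<in> S x y (Suc n). P (f (Suc n))} \<subseteq> (SIGMA g:S x y n. ?B g)"
      by (auto simp: S_def PiE_def extensional_def less_Suc_eq)
    show "(\<lambda>(g, c). g(Suc n := c)) ` (SIGMA g:S x y n. ?B g) \<subseteq> {f \<in> S x y (Suc n). P (f (Suc n))}"
      by (auto simp: S_def PiE_def extensional_def less_Suc_eq)
  qed
  hence "card {f\<in>S x y (Suc n). P (f (Suc n))} = card (SIGMA g:S x y n. ?B g)"
    by (rule bij_betw_same_card)
  also have "\<dots> = (\<Sum>g\<in>S x y n. card (?B g))"
    by (rule card_SigmaI) (auto simp: finS)
  finally show ?thesis .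
qed

lemma S_range: "g \<in> S x y n \<Longrightarrow> g n \<in> {1..x}"
  by (auto simp: S_def PiE_def Pi_def)

lemma cnt1: "d \<in> {1..x} \<Longrightarrow> int (card {c\<in>{1..x}. (d \<noteq> c \<or> d > y) \<and> True}) = int x - (if d \<le> y then 1 else 0)"
proof (cases "d \<le> y")
  case True
  assume d: "d \<in> {1..x}"
  have "{c\<in>{1..x}. (d \<noteq> c \<or> d > y) \<and> True} = {1..x} - {d}" using True by auto
  thus ?thesis using d True by simp
next
  case False
  have "{c\<in>{1..x}. (d \<noteq> c \<or> d > y) \<and> True} = {1..x}" using False by auto
  thus ?thesis using False by simp
qed

lemma cnt2: "d \<in> {1..x} \<Longrightarrow> y \<le> x \<Longrightarrow> int (card {c\<in>{1..x}. (d \<noteq> c \<or> d > y) \<and> c \<le> y}) = int y - (if d \<le> y then 1 else 0)"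
proof (cases "d \<le> y")
  case True
  assume d: "d \<in> {1..x}" "y \<le> x"
  have "{c\<in>{1..x}. (d \<noteq> c \<or> d > y) \<and> c \<le> y} = {1..y} - {d}" using True d by auto
  thus ?thesis using d True by simp
next
  case False
  assume d: "d \<in> {1..x}" "y \<le> x"
  have "{c\<in>{1..x}. (d \<noteq> c \<or> d > y) \<and> c \<le> y} = {1..y}" using False d by auto
  thus ?thesis using False by simp
qed

definition aa :: "nat \<Rightarrow> nat \<Rightarrow> nat \<Rightarrow> int" where "aa x y n = int (card (S x y n))"
definition ll :: "nat \<Rightarrow> nat \<Rightarrow> nat \<Rightarrow> int" where "ll x y n = int (card {f\<in>S x y n. f n \<le> y})"

lemma sum_ind: "(\<Sum>g\<in>S x y n. (if g n \<le> y then 1 else 0::int)) = ll x y n"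
proof -
  have "ll x y n = (\<Sum>g\<in>{g\<in>S x y n. g n \<le> y}. 1)"
    by (simp add: ll_def)
  also have "\<dots> = (\<Sum>g\<in>S x y n. (if g n \<le> y then 1 else 0::int))"
    by (rule sum.inter_filter[OF finS])
  finally show ?thesis by simp
qed

lemma rec_a: "aa x y (Suc n) = int x * aa x y n - ll x y n"
proof -
  have "aa x y (Suc n) = int (card {f\<in>S x y (Suc n). True})" by (simp add: aa_def)
  also have "\<dots> = int (\<Sum>g\<in>S x y n. card {c\<in>{1..x}. (g n \<noteq> c \<or> g n > y) \<and> True})"
    by (rule arg_cong[where f=int], rule decomp[of x y n "\<lambda>_. True"])
  also have "\<dots> = (\<Sum>g\<in>S x y n. int (card {c\<in>{1..x}. (g n \<noteq> c \<or> g n > y) \<and> True}))"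
    by (rule of_nat_sum)
  also have "\<dots> = (\<Sum>g\<in>S x y n. int x - (if g n \<le> y then 1 else 0))"
    by (rule sum.cong[OF refl], rule cnt1, erule S_range)
  also have "\<dots> = int x * aa x y n - ll x y n"
    by (simp add: sum_subtractf sum_ind aa_def)
  finally show ?thesis .
qed

lemma rec_l: "y \<le> x \<Longrightarrow> ll x y (Suc n) = int y * aa x y n - ll x y n"
proof -
  assume yx: "y \<le> x"
  have "ll x y (Suc n) = int (\<Sum>g\<in>S x y n. card {c\<in>{1..x}. (g n \<noteq> c \<or> g n > y) \<and> c \<le> y})"
    unfolding ll_def by (rule arg_cong[where f=int], rule decomp[of x y n "\<lambda>c. c \<le> y"])
  also have "\<dots> = (\<Sum>g\<in>S x y n. int (card {c\<in>{1..x}. (g n \<noteq> c \<or> g n > y) \<and> c \<le> y}))"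
    by (rule of_nat_sum)
  also have "\<dots> = (\<Sum>g\<in>S x y n. int y - (if g n \<le> y then 1 else 0))"
    by (rule sum.cong[OF refl], rule cnt2, erule S_range, rule yx)
  also have "\<dots> = int y * aa x y n - ll x y n"
    by (simp add: sum_subtractf sum_ind aa_def)
  finally show ?thesis .
qed

lemma S0: "S x y 0 = {0..<Suc 0} \<rightarrow>\<^sub>E {1..x}" by (simp add: S_def)

lemma a0: "aa x y 0 = int x"
  by (simp add: aa_def S0 card_PiE)

lemma l0: "y \<le> x \<Longrightarrow> ll x y 0 = int y"
proof -
  assume yx: "y \<le> x"
  have "{f\<in>S x y 0. f 0 \<le> y} = {0..<Suc 0} \<rightarrow>\<^sub>E {1..y}"
    using yx by (auto simp: S0 PiE_def Pi_def)
  thus ?thesis by (simp add: ll_def card_PiE)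
qed

lemma rec2: "y \<le> x \<Longrightarrow> aa x y (Suc (Suc n)) = (int x - 1) * aa x y (Suc n) + (int x - int y) * aa x y n"
proof -
  assume yx: "y \<le> x"
  have "ll x y n = int x * aa x y n - aa x y (Suc n)" using rec_a[of x y n] by simp
  thus ?thesis using rec_a[of x y "Suc n"] rec_l[OF yx, of n] by (simp add: algebra_simps)
qed

fun bb :: "nat \<Rightarrow> nat \<Rightarrow> nat \<Rightarrow> real" where
  "bb x y 0 = 1"
| "bb x y (Suc n) = real_of_int (aa x y n)"

lemma bb_rec: "y \<le> x \<Longrightarrow> bb x y (Suc (Suc n)) = (real x - 1) * bb x y (Suc n) + (real x - real y) * bb x y n"
proof (cases n)
  case 0
  assume yx: "y \<le> x"
  have "aa x y 1 = int x * int x - int y" using rec_a[of x y 0] a0 l0[OF yx] by simp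
  hence "real_of_int (aa x y 1) = real x * real x - real y" by simp
  thus ?thesis using 0 a0[of x y] yx by (simp add: algebra_simps)
next
  case (Suc m)
  assume yx: "y \<le> x"
  have "real_of_int (aa x y (Suc (Suc m))) = real_of_int ((int x - 1) * aa x y (Suc m) + (int x - int y) * aa x y m)"
    using rec2[OF yx] by simp
  thus ?thesis using Suc yx by (simp add: of_nat_diff)
qed

lemma root_eq:
  fixes s b c r :: real
  assumes "s^2 = b^2 + 4*c" and "r = (b - s)/2 \<or> r = (b + s)/2"
  shows "r^2 = b * r + c"
proof -
  have key: "(b + t)^2 / 4 = b * ((b + t)/2) + c" if "t^2 = s^2" for t
  proof -
    have "(b + t)^2 / 4 - (b * ((b + t)/2) + c) = (t^2 - b^2 - 4*c) / 4"
      by (simp add: power2_eq_square field_simps)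
    also have "\<dots> = 0" using that assms(1) by simp
    finally show ?thesis by simp
  qed
  from assms(2) show ?thesis
  proof
    assume r: "r = (b - s)/2"
    have "r^2 = (b + (-s))^2 / 4" unfolding r by (simp add: power2_eq_square field_simps)
    also have "\<dots> = b * ((b + (-s))/2) + c" by (rule key) simp
    finally show ?thesis unfolding r by simp
  next
    assume r: "r = (b + s)/2"
    have "r^2 = (b + s)^2 / 4" unfolding r by (simp add: power2_eq_square field_simps)
    also have "\<dots> = b * ((b + s)/2) + c" by (rule key) simp
    finally show ?thesis unfolding r by simp
  qed
qed

theorem theorem1:
  fixes n x y :: nat
  assumes "n \<ge> 1" and "y \<le> x" and "\<not> (x = 1 \<and> y = 1)"
  shows "real (bivariate_chrom (path_vertices n) (path_edges n) x y) =
    (sqrt ((real x + 1)^2 - 4 * real y) - real x - 1) / (2 * sqrt ((real x + 1)^2 - 4 * real y))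
      * ((real x - 1 - sqrt ((real x + 1)^2 - 4 * real y)) / 2) ^ n
  + (sqrt ((real x + 1)^2 - 4 * real y) + real x + 1) / (2 * sqrt ((real x + 1)^2 - 4 * real y))
      * ((real x - 1 + sqrt ((real x + 1)^2 - 4 * real y)) / 2) ^ n"
proof -
  define D where "D = (real x + 1)^2 - 4 * real y"
  define s where "s = sqrt D"
  define r1 where "r1 = (real x - 1 - s) / 2"
  define r2 where "r2 = (real x - 1 + s) / 2"
  define A where "A = (s - real x - 1) / (2 * s)"
  define B where "B = (s + real x + 1) / (2 * s)"
  define G where "G = (\<lambda>k. A * r1 ^ k + B * r2 ^ k)"
  have yx: "real y \<le> real x" using assms by simp
  have "(real x - 1)^2 \<ge> 0" by simp
  hence Dge: "D \<ge> (real x - 1)^2" using yx unfolding D_def by (simp add: power2_eq_square algebra_simps)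
  have D0: "D \<ge> 0" using Dge by (meson order_trans zero_le_power2)
  have s2: "s^2 = D" unfolding s_def using D0 by simp
  have Dpos: "D \<noteq> 0"
  proof
    assume "D = 0"
    hence "(real x - 1)^2 \<le> 0" using Dge by simp
    hence x1: "real x = 1" by simp
    hence "x = 1" by simp
    moreover have "real y = 1" using \<open>D = 0\<close> x1 unfolding D_def by simp
    hence "y = 1" by simp
    ultimately show False using assms(3) by simp
  qed
  have sne: "s \<noteq> 0" using s2 Dpos by auto
  have sD: "s^2 = (real x - 1)^2 + 4 * (real x - real y)" using s2 unfolding D_def by (simp add: power2_eq_square algebra_simps)
  have r1sq: "r1^2 = (real x - 1) * r1 + (real x - real y)"
    by (rule root_eq[OF sD]) (simp add: r1_def)
  have r2sq: "r2^2 = (real x - 1) * r2 + (real x - real y)"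
    by (rule root_eq[OF sD]) (simp add: r2_def)
  have G0: "G 0 = 1" unfolding G_def A_def B_def using sne by (simp add: field_simps)
  have G1: "G 1 = real x" unfolding G_def A_def B_def r1_def r2_def using sne
    by (simp add: field_simps power2_eq_square)
  have Grec: "G (Suc (Suc k)) = (real x - 1) * G (Suc k) + (real x - real y) * G k" for k
  proof -
    have "G (Suc (Suc k)) = A * r1^k * r1^2 + B * r2^k * r2^2" unfolding G_def by (simp add: power2_eq_square)
    also have "\<dots> = (real x - 1) * G (Suc k) + (real x - real y) * G k"
      unfolding r1sq r2sq G_def by (simp add: algebra_simps)
    finally show ?thesis .
  qed
  have main: "bb x y k = G k \<and> bb x y (Suc k) = G (Suc k)" for k
  proof (induction k)
    case 0
    show ?case using G0 G1 a0[of x y] by simp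
  next
    case (Suc k)
    thus ?case using bb_rec[OF assms(2), of k] Grec[of k] by simp
  qed
  obtain m where m: "n = Suc m" using assms(1) by (cases n) auto
  have "real (bivariate_chrom (path_vertices n) (path_edges n) x y) = bb x y n"
    unfolding m link by (simp add: aa_def)
  also have "\<dots> = G n" using main by blast
  finally show ?thesis unfolding G_def A_def B_def r1_def r2_def s_def D_def .
qed

end
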